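(* Consider the planner's problem \[ \min_{p,q,\omega\in\mathbb{R}^n,\ \theta\in\mathbb{R}^n}\ \sum_{j=1}^n J_j(p_j)+\tfrac12\omega^TD\omega \] subject to (with $\tilde\theta:=C^T\theta$) \[ q=p,\qquad \mathbf 1^T(q-d)=0,\qquad H^T(q-d)\le F,\qquad q-d-D\omega-CB\tilde\theta=0, \] and the problem \[ \text{(P2)}\quad \min_{q\in\mathbb{R}^{n}} \ \sum_{j=1}^{n} J_j(q_j) \quad\text{s.t.}\quad \mathbf 1^T(q-d)=0,\quad H^T(q-d)\le F . \] Then $(p^*,q^*,\omega^*,\tilde\theta^* )$ is an optimal solution to the planner's problem if and only if $p^*=q^*$, $\omega^*=0$, $\tilde\theta^*=C^TL^\dagger(q^*-d)$, and $q^*$ is an optimal solution to (P2).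
   Context: A power network is a connected directed graph $(\mathcal N,\mathcal E)$ with $\mathcal N=\{1,\dots,n\}$ (if $(j,k)\in\mathcal E$ then $(k,j)\notin\mathcal E$). $C\in\mathbb{R}^{n\times|\mathcal E|}$ is the incidence matrix: $C_{j,e}=1$ if $e=(j,k)\in\mathcal E$, $C_{j,e}=-1$ if $e=(k,j)\in\mathcal E$, $0$ otherwise. $B$ is an $|\mathcal E|\times|\mathcal E|$ diagonal matrix with positive diagonal entries; $D$ is an $n\times n$ diagonal matrix with positive diagonal entries. $L:=CBC^T$, $L^\dagger$ its Moore–Penrose inverse, and $H\in\mathbb{R}^{n\times2|\mathcal E|}$ is defined by $H^T=\begin{bmatrix} BC^TL^\dagger\\ -BC^TL^\dagger\end{bmatrix}$. $F:=\begin{bmatrix}\overline F\\ -\underline F\end{bmatrix}$ for given line limits $\underline F,\overline F\in\mathbb{R}^{|\mathcal E|}$. $d\in\mathbb{R}^n$ is given; each $J_j:\mathbb{R}\to\mathbb{R}$ is strictly convex and twice differentiable. *)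

theory Defs
  imports "HOL-Analysis.Analysis"
begin

definition incidence :: "('e \<Rightarrow> 'n) \<Rightarrow> ('e \<Rightarrow> 'n) \<Rightarrow> real^'e^'n" where
  "incidence src tgt = (\<chi> j e. if src e = j then 1 else if tgt e = j then -1 else 0)"

definition simple_oriented_graph :: "('e \<Rightarrow> 'n) \<Rightarrow> ('e \<Rightarrow> 'n) \<Rightarrow> bool" where
  "simple_oriented_graph src tgt \<longleftrightarrow>
     inj (\<lambda>e. (src e, tgt e)) \<and> (\<forall>e e'. \<not> (src e' = tgt e \<and> tgt e' = src e))"

definition graph_connected :: "('e \<Rightarrow> 'n) \<Rightarrow> ('e \<Rightarrow> 'n) \<Rightarrow> bool" where
  "graph_connected src tgt \<longleftrightarrow>
     (\<forall>j k. (\<lambda>a b. \<exists>e. (src e = a \<and> tgt e = b) \<or> (src e = b \<and> tgt e = a))\<^sup>*\<^sup>* j k)"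

definition pos_diag :: "real^'m^'m \<Rightarrow> bool" where
  "pos_diag M \<longleftrightarrow> (\<forall>i j. i \<noteq> j \<longrightarrow> M $ i $ j = 0) \<and> (\<forall>i. M $ i $ i > 0)"

definition is_moore_penrose :: "real^'m^'k \<Rightarrow> real^'k^'m \<Rightarrow> bool" where
  "is_moore_penrose A X \<longleftrightarrow> A ** X ** A = A \<and> X ** A ** X = X \<and>
     transpose (A ** X) = A ** X \<and> transpose (X ** A) = X ** A"

definition pinv :: "real^'m^'k \<Rightarrow> real^'k^'m" where
  "pinv A = (THE X. is_moore_penrose A X)"

definition Hmat :: "real^'e^'n \<Rightarrow> real^'e^'e \<Rightarrow> real^('e + 'e)^'n" where
  "Hmat C B = (let M = B ** transpose C ** pinv (C ** B ** transpose C) in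
     \<chi> j i. (case i of Inl e \<Rightarrow> M $ e $ j | Inr e \<Rightarrow> - (M $ e $ j)))"

definition Fvec :: "real^'e \<Rightarrow> real^'e \<Rightarrow> real^('e + 'e)" where
  "Fvec Flo Fup = (\<chi> i. case i of Inl e \<Rightarrow> Fup $ e | Inr e \<Rightarrow> - (Flo $ e))"

definition twice_differentiable :: "(real \<Rightarrow> real) \<Rightarrow> bool" where
  "twice_differentiable f \<longleftrightarrow> (\<forall>x. f differentiable at x) \<and> (\<forall>x. deriv f differentiable at x)"

definition strictly_convex :: "(real \<Rightarrow> real) \<Rightarrow> bool" where
  "strictly_convex f \<longleftrightarrow> (\<forall>x y t. x \<noteq> y \<and> 0 < t \<and> t < 1 \<longrightarrow>
     f ((1 - t) * x + t * y) < (1 - t) * f x + t * f y)"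

definition ones :: "real^'n" where "ones = (\<chi> i. 1)"

definition planner_feasible where
  "planner_feasible C B D H F d p q (\<omega>::real^'n) (\<theta>t::real^'e) \<longleftrightarrow>
     (\<exists>\<theta>. \<theta>t = transpose C *v \<theta>) \<and> q = p \<and> ones \<bullet> (q - d) = 0 \<and>
     (\<forall>i. (transpose H *v (q - d)) $ i \<le> F $ i) \<and>
     q - d - D *v \<omega> - C *v (B *v \<theta>t) = 0"

definition planner_obj :: "('n \<Rightarrow> real \<Rightarrow> real) \<Rightarrow> real^'n^'n \<Rightarrow> real^'n \<Rightarrow> real^'n \<Rightarrow> real" where
  "planner_obj J D p \<omega> = (\<Sum>j\<in>UNIV. J j (p $ j)) + (1/2) * (\<omega> \<bullet> (D *v \<omega>))"

definition planner_optimal where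
  "planner_optimal J C B D H F d p q \<omega> \<theta>t \<longleftrightarrow>
     planner_feasible C B D H F d p q \<omega> \<theta>t \<and>
     (\<forall>p' q' \<omega>' \<theta>t'. planner_feasible C B D H F d p' q' \<omega>' \<theta>t' \<longrightarrow>
        planner_obj J D p \<omega> \<le> planner_obj J D p' \<omega>')"

definition P2_feasible :: "real^'k^'n \<Rightarrow> real^'k \<Rightarrow> real^'n \<Rightarrow> real^'n \<Rightarrow> bool" where
  "P2_feasible H F d q \<longleftrightarrow> ones \<bullet> (q - d) = 0 \<and> (\<forall>i. (transpose H *v (q - d)) $ i \<le> F $ i)"

definition P2_optimal :: "('n \<Rightarrow> real \<Rightarrow> real) \<Rightarrow> real^'k^'n \<Rightarrow> real^'k \<Rightarrow> real^'n \<Rightarrow> real^'n \<Rightarrow> bool" where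
  "P2_optimal J H F d q \<longleftrightarrow> P2_feasible H F d q \<and>
     (\<forall>q'. P2_feasible H F d q' \<longrightarrow> (\<Sum>j\<in>UNIV. J j (q $ j)) \<le> (\<Sum>j\<in>UNIV. J j (q' $ j)))"

end

theory Submission
  imports Defs
begin

declare transpose_matrix_vector[simp del]

lemma mm_diff_l: "(A::real^'n^'m) ** (B - C) = A ** B - A ** C"
  by (simp add: matrix_matrix_mult_def vec_eq_iff sum_subtractf algebra_simps)
lemma mm_diff_r: "((A::real^'n^'m) - B) ** C = A ** C - B ** C"
  by (simp add: matrix_matrix_mult_def vec_eq_iff sum_subtractf algebra_simps)
lemma mm_add_r: "((A::real^'n^'m) + B) ** C = A ** C + B ** C"
  by (simp add: matrix_matrix_mult_def vec_eq_iff sum.distrib algebra_simps)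
lemma transpose_diff: "transpose ((A::real^'n^'m) - B) = transpose A - transpose B"
  by (simp add: transpose_def vec_eq_iff)

lemma pos_diag_mv: "pos_diag D \<Longrightarrow> (D *v y) $ i = D$i$i * y$i"
proof -
  assume "pos_diag D"
  hence off: "\<And>j. j \<noteq> i \<Longrightarrow> D$i$j = 0" unfolding pos_diag_def by simp
  have "(\<Sum>j\<in>UNIV. D$i$j * y$j) = (\<Sum>j\<in>UNIV. if j = i then D$i$i * y$i else 0)"
    by (rule sum.cong) (auto simp: off)
  also have "\<dots> = D$i$i * y$i" by simp
  finally show ?thesis by (simp add: matrix_vector_mult_def)
qed

lemma pos_diag_quad: "pos_diag D \<Longrightarrow> y \<bullet> (D *v y) = (\<Sum>i\<in>UNIV. D$i$i * (y$i)^2)"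
  by (simp add: inner_vec_def pos_diag_mv power2_eq_square algebra_simps)

lemma pos_diag_nonneg: "pos_diag D \<Longrightarrow> y \<bullet> (D *v y) \<ge> 0"
  by (simp add: pos_diag_quad sum_nonneg pos_diag_def less_imp_le)

lemma pos_diag_zero: "pos_diag D \<Longrightarrow> y \<bullet> (D *v y) = 0 \<Longrightarrow> y = 0"
proof -
  assume d: "pos_diag D" and z: "y \<bullet> (D *v y) = 0"
  have nn: "\<forall>i\<in>UNIV. 0 \<le> D$i$i * (y$i)^2" using d by (simp add: pos_diag_def less_imp_le)
  have "\<forall>i\<in>UNIV. D$i$i * (y$i)^2 = 0"
    using z pos_diag_quad[OF d] nn by (simp add: sum_nonneg_eq_0_iff)
  thus "y = 0" using d by (auto simp: vec_eq_iff pos_diag_def) (metis order_less_irrefl)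
qed

lemma pos_diag_transpose: "pos_diag D \<Longrightarrow> transpose D = D"
  by (simp add: pos_diag_def transpose_def vec_eq_iff) metis

lemma dot_mv: "(x::real^'m) \<bullet> ((C::real^'n^'m) *v z) = (transpose C *v x) \<bullet> z"
  by (metis dot_lmul_matrix transpose_matrix_vector)

lemma mp_unique:
  assumes "is_moore_penrose (A::real^'m^'k) X1" "is_moore_penrose A X2"
  shows "X1 = X2"
proof -
  have a: "A ** X1 ** A = A" "X1 ** A ** X1 = X1" "transpose (A ** X1) = A ** X1" "transpose (X1 ** A) = X1 ** A"
   and b: "A ** X2 ** A = A" "X2 ** A ** X2 = X2" "transpose (A ** X2) = A ** X2" "transpose (X2 ** A) = X2 ** A"
    using assms by (auto simp: is_moore_penrose_def)
  have "X1 = X1 ** (A ** X1)" using a by (simp add: matrix_mul_assoc)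
  also have "\<dots> = X1 ** transpose (A ** X1)" using a by simp
  also have "\<dots> = X1 ** transpose (A ** X2 ** A ** X1)" using b by simp
  also have "\<dots> = X1 ** (transpose (A ** X1) ** transpose (A ** X2))"
    by (simp add: matrix_transpose_mul matrix_mul_assoc)
  also have "\<dots> = X1 ** A ** X2" using a b by (simp add: matrix_mul_assoc)
  finally have 1: "X1 = X1 ** A ** X2" .
  have "X2 = (X2 ** A) ** X2" using b by (simp add: matrix_mul_assoc)
  also have "\<dots> = transpose (X2 ** A) ** X2" using b by simp
  also have "\<dots> = transpose (X2 ** A ** X1 ** A) ** X2" using a(1) by (metis matrix_mul_assoc)
  also have "\<dots> = (transpose (X1 ** A) ** transpose (X2 ** A)) ** X2"
    by (simp add: matrix_transpose_mul matrix_mul_assoc)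
  also have "\<dots> = X1 ** A ** X2" using a b by (metis matrix_mul_assoc)
  finally show ?thesis using 1 by simp
qed

lemma incidence_tmv:
  assumes "src e \<noteq> tgt e"
  shows "(transpose (incidence src tgt) *v x) $ e = x $ src e - x $ tgt e"
proof -
  have "\<And>j. (if src e = j then 1 else if tgt e = j then -1 else 0) * x $ j
      = (if j = src e then x $ j else 0) - (if j = tgt e then x $ j else 0)"
    using assms by auto
  hence "(\<Sum>j\<in>UNIV. (if src e = j then 1 else if tgt e = j then -1 else 0) * x $ j)
      = (\<Sum>j\<in>UNIV. (if j = src e then x $ j else 0) - (if j = tgt e then x $ j else 0))"
    by (intro sum.cong) auto
  also have "\<dots> = (\<Sum>j\<in>UNIV. (if j = src e then x $ j else 0)) - (\<Sum>j\<in>UNIV. (if j = tgt e then x $ j else 0))"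
    by (simp only: sum_subtractf)
  finally have "(\<Sum>j\<in>UNIV. (if src e = j then 1 else if tgt e = j then -1 else 0) * x $ j) = x $ src e - x $ tgt e"
    by simp
  thus ?thesis by (simp add: matrix_vector_mult_def transpose_def incidence_def)
qed

lemma graph_facts:
  fixes src tgt :: "'e::finite \<Rightarrow> 'n::finite"
  assumes "simple_oriented_graph src tgt" "graph_connected src tgt"
  shows "transpose (incidence src tgt) *v ones = 0"
    and "\<And>x. transpose (incidence src tgt) *v x = 0 \<Longrightarrow> \<exists>c. x = c *s ones"
proof -
  have ne: "\<And>e. src e \<noteq> tgt e" using assms(1) unfolding simple_oriented_graph_def by metis
  have tmv: "\<And>e x. (transpose (incidence src tgt) *v x) $ e = x $ src e - x $ tgt e"
    using incidence_tmv ne by blast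
  show "transpose (incidence src tgt) *v ones = 0"
    by (simp add: vec_eq_iff tmv ones_def del: transpose_matrix_vector)
  fix x :: "real^'n"
  assume z: "transpose (incidence src tgt) *v x = 0"
  have edge: "x $ src e = x $ tgt e" for e
    using arg_cong[OF z, of "\<lambda>v. v $ e"] by (simp add: tmv)
  have "x $ j = x $ k" for j k
  proof -
    have "(\<lambda>a b. \<exists>e. (src e = a \<and> tgt e = b) \<or> (src e = b \<and> tgt e = a))\<^sup>*\<^sup>* j k"
      using assms(2) unfolding graph_connected_def by blast
    thus ?thesis
    proof (induction rule: rtranclp_induct)
      case base then show ?case by simp
    next
      case (step y z) then show ?case using edge by metis
    qed
  qed
  hence "x = (x $ undefined) *s ones" by (simp add: vec_eq_iff ones_def)
  thus "\<exists>c. x = c *s ones" by blast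
qed

lemma ones_dot_smul: "ones \<bullet> (c *s (ones::real^'n)) = c * real CARD('n)"
  by (simp add: ones_def inner_vec_def)

lemma lap_facts:
  fixes C :: "real^'e^'n" and B :: "real^'e^'e"
  assumes c1: "transpose C *v ones = 0"
    and ck: "\<And>x. transpose C *v x = 0 \<Longrightarrow> \<exists>c. x = c *s ones"
    and pB: "pos_diag B"
  defines "L \<equiv> C ** B ** transpose C"
  shows "\<And>x. L *v x = 0 \<Longrightarrow> transpose C *v x = 0"
    and "\<And>x. ones \<bullet> (L *v x) = 0"
    and "L *v ones = 0"
    and "transpose L = L"
    and "is_moore_penrose L (pinv L)"
proof -
  have Lv: "L *v w = C *v (B *v (transpose C *v w))" for w
    by (simp add: L_def matrix_vector_mul_assoc matrix_mul_assoc del: transpose_matrix_vector)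
  show ker: "transpose C *v x = 0" if "L *v x = 0" for x
  proof -
    have "x \<bullet> (L *v x) = (transpose C *v x) \<bullet> (B *v (transpose C *v x))"
      by (simp add: Lv dot_mv)
    thus ?thesis using that pos_diag_zero[OF pB] by simp
  qed
  show od: "ones \<bullet> (L *v x) = 0" for x
    by (simp add: Lv dot_mv c1)
  show L1: "L *v ones = 0" by (simp add: Lv c1)
  show sym: "transpose L = L"
    by (simp add: L_def matrix_transpose_mul pos_diag_transpose[OF pB] matrix_mul_assoc)
  define n where "n = real CARD('n)"
  have npos: "n > 0" by (simp add: n_def)
  define P :: "real^'n^'n" where "P = (\<chi> i j. 1 / n)"
  have rows: "(\<Sum>k\<in>UNIV. L$i$k) = 0" for i
    using arg_cong[OF L1, of "\<lambda>v. v $ i"] by (simp add: matrix_vector_mult_def ones_def)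
  have cols: "(\<Sum>k\<in>UNIV. L$k$j) = 0" for j
  proof -
    have "L$k$j = L$j$k" for k using arg_cong[OF sym, of "\<lambda>M. M $ j $ k"] by (simp add: transpose_def)
    thus ?thesis using rows[of j] by simp
  qed
  have PP: "P ** P = P"
    using npos by (simp add: P_def matrix_matrix_mult_def vec_eq_iff n_def)
  have LP: "L ** P = 0"
  proof -
    have "(\<Sum>k\<in>UNIV. L$i$k * (1/n)) = 0" for i
      using rows[of i] by (simp add: sum_divide_distrib[symmetric])
    thus ?thesis by (simp add: P_def matrix_matrix_mult_def vec_eq_iff)
  qed
  have PL: "P ** L = 0"
  proof -
    have "(\<Sum>k\<in>UNIV. (1/n) * L$k$j) = 0" for j
      using cols[of j] by (simp add: sum_divide_distrib[symmetric])
    thus ?thesis by (simp add: P_def matrix_matrix_mult_def vec_eq_iff)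
  qed
  have tP: "transpose P = P" by (simp add: P_def transpose_def vec_eq_iff)
  define M where "M = L + P"
  have Pv: "P *v x = (sum (($) x) UNIV / n) *s ones" for x
    by (simp add: P_def matrix_vector_mult_def vec_eq_iff ones_def sum_divide_distrib)
  have Minj: "x = 0" if "M *v x = 0" for x
  proof -
    have "ones \<bullet> (M *v x) = ones \<bullet> (L *v x) + ones \<bullet> (P *v x)"
      by (simp add: M_def matrix_vector_mult_add_rdistrib inner_add_right)
    also have "\<dots> = sum (($) x) UNIV"
      using npos by (simp add: od Pv ones_dot_smul n_def)
    finally have s0: "sum (($) x) UNIV = 0" using that by simp
    hence "L *v x = 0" using that by (simp add: M_def matrix_vector_mult_add_rdistrib Pv)
    then obtain c where c: "x = c *s ones" using ker ck by blast
    have "sum (($) x) UNIV = c * n" by (simp add: c ones_def n_def)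
    hence "c = 0" using s0 npos by simp
    thus ?thesis using c by simp
  qed
  obtain N where NM: "N ** M = mat 1"
    using Minj matrix_left_invertible_ker by blast
  hence MN: "M ** N = mat 1" using matrix_left_right_inverse by blast
  have MP: "M ** P = P" by (simp add: M_def mm_add_r LP PP)
  have PM: "P ** M = P" by (simp add: M_def matrix_add_ldistrib PL PP)
  have NP: "N ** P = P" by (metis MP NM matrix_mul_assoc matrix_mul_lid)
  have PN: "P ** N = P" by (metis PM MN matrix_mul_assoc matrix_mul_rid)
  have LM: "L = M - P" by (simp add: M_def)
  define X where "X = N - P"
  have LX: "L ** X = mat 1 - P"
    by (simp add: X_def mm_diff_l LP, simp add: LM mm_diff_r MN PN)
  have XL: "X ** L = mat 1 - P"
    by (simp add: X_def mm_diff_r PL, simp add: LM mm_diff_l NM NP)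
  have "is_moore_penrose L X"
    unfolding is_moore_penrose_def
    by (simp add: LX XL transpose_diff tP mm_diff_r PL, simp add: X_def mm_diff_l PN PP)
  moreover have "is_moore_penrose L X \<Longrightarrow> pinv L = X"
    unfolding pinv_def using mp_unique by blast
  ultimately show "is_moore_penrose L (pinv L)" by simp
qed

theorem theorem1:
  fixes src tgt :: "'e::finite \<Rightarrow> 'n::finite"
    and B :: "real^'e^'e" and D :: "real^'n^'n"
    and Flo Fup :: "real^'e" and d :: "real^'n"
    and J :: "'n \<Rightarrow> real \<Rightarrow> real"
    and p q \<omega> :: "real^'n" and \<theta>t :: "real^'e"
  assumes "simple_oriented_graph src tgt"
    and "graph_connected src tgt"
    and "pos_diag B" and "pos_diag D"
    and "\<And>j. strictly_convex (J j)"
    and "\<And>j. twice_differentiable (J j)"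
  defines "C \<equiv> incidence src tgt"
  defines "L \<equiv> C ** B ** transpose C"
  defines "H \<equiv> Hmat C B"
  defines "F \<equiv> Fvec Flo Fup"
  shows "planner_optimal J C B D H F d p q \<omega> \<theta>t \<longleftrightarrow>
     (p = q \<and> \<omega> = 0 \<and> \<theta>t = transpose C *v (pinv L *v (q - d)) \<and> P2_optimal J H F d q)"
proof -
  note gf = graph_facts[OF assms(1,2), folded C_def]
  note lf = lap_facts[OF gf(1) gf(2) assms(3), folded L_def]
  define X where "X = pinv L"
  have mp: "L ** X ** L = L" "transpose (L ** X) = L ** X"
    using lf(5) by (auto simp: is_moore_penrose_def X_def)
  have Lv: "C *v (B *v (transpose C *v w)) = L *v w" for w
    by (simp add: L_def matrix_vector_mul_assoc matrix_mul_assoc)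
  have F4: "L *v (X *v x) = x" if "ones \<bullet> x = 0" for x
  proof -
    define y where "y = x - L *v (X *v x)"
    have "transpose L ** (L ** X) = transpose (L ** X ** L)"
      using mp(2) by (simp add: matrix_transpose_mul matrix_mul_assoc)
    hence tl: "transpose L ** (L ** X) = transpose L" using mp(1) by simp
    have "L *v y = transpose L *v x - (transpose L ** (L ** X)) *v x"
      using lf(4) by (simp add: y_def matrix_vector_mult_diff_distrib matrix_vector_mul_assoc)
    hence "L *v y = 0" using tl by simp
    then obtain c where c: "y = c *s ones" using lf(1) gf(2) by blast
    have "ones \<bullet> y = 0" using that lf(2) by (simp add: y_def inner_diff_right)
    hence "c = 0" using c ones_dot_smul[of c, where 'n='n] by simp
    thus ?thesis using c y_def by simp
  qed
  have F5: "transpose C *v (X *v (L *v \<theta>)) = transpose C *v \<theta>" for \<theta>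
  proof -
    have "L *v (X *v (L *v \<theta>) - \<theta>) = 0"
      using mp(1) by (simp add: matrix_vector_mult_diff_distrib matrix_vector_mul_assoc matrix_mul_assoc)
    hence "transpose C *v (X *v (L *v \<theta>) - \<theta>) = 0" using lf(1) by blast
    thus ?thesis by (simp add: matrix_vector_mult_diff_distrib)
  qed
  have feas0: "planner_feasible C B D H F d q' q' 0 (transpose C *v (X *v (q' - d)))"
    if "P2_feasible H F d q'" for q'
    using that F4 by (auto simp: planner_feasible_def P2_feasible_def Lv)
  have obj0: "planner_obj J D q' 0 = (\<Sum>j\<in>UNIV. J j (q' $ j))" for q'
    by (simp add: planner_obj_def)
  show ?thesis
  proof
    assume opt: "planner_optimal J C B D H F d p q \<omega> \<theta>t"
    hence fe: "planner_feasible C B D H F d p q \<omega> \<theta>t" by (simp add: planner_optimal_def)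
    then obtain \<theta> where th: "\<theta>t = transpose C *v \<theta>" and pq: "q = p"
      and p2f: "P2_feasible H F d q" and eq: "q - d - D *v \<omega> - C *v (B *v \<theta>t) = 0"
      by (auto simp: planner_feasible_def P2_feasible_def)
    have "planner_obj J D p \<omega> \<le> planner_obj J D q 0"
      using opt feas0[OF p2f] by (auto simp: planner_optimal_def)
    hence "\<omega> \<bullet> (D *v \<omega>) \<le> 0" using pq by (simp add: planner_obj_def)
    hence w0: "\<omega> = 0" using pos_diag_nonneg[OF assms(4), of \<omega>] pos_diag_zero[OF assms(4)] by force
    have qd: "q - d = L *v \<theta>" using eq w0 th Lv by simp
    have tht: "\<theta>t = transpose C *v (X *v (q - d))" using th qd F5 by simp
    have "P2_optimal J H F d q"
      unfolding P2_optimal_def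
    proof (intro conjI allI impI p2f)
      fix q' assume "P2_feasible H F d q'"
      hence "planner_obj J D p \<omega> \<le> planner_obj J D q' 0"
        using opt feas0 unfolding planner_optimal_def by blast
      thus "(\<Sum>j\<in>UNIV. J j (q $ j)) \<le> (\<Sum>j\<in>UNIV. J j (q' $ j))"
        using pq w0 by (simp add: obj0)
    qed
    thus "p = q \<and> \<omega> = 0 \<and> \<theta>t = transpose C *v (pinv L *v (q - d)) \<and> P2_optimal J H F d q"
      using pq w0 tht X_def by simp
  next
    assume "p = q \<and> \<omega> = 0 \<and> \<theta>t = transpose C *v (pinv L *v (q - d)) \<and> P2_optimal J H F d q"
    hence pq: "p = q" and w0: "\<omega> = 0" and tht: "\<theta>t = transpose C *v (X *v (q - d))"
      and p2: "P2_optimal J H F d q" by (auto simp: X_def)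
    show "planner_optimal J C B D H F d p q \<omega> \<theta>t"
      unfolding planner_optimal_def
    proof (intro conjI allI impI)
      show "planner_feasible C B D H F d p q \<omega> \<theta>t"
        using feas0 p2 pq w0 tht by (simp add: P2_optimal_def)
      fix p' q' \<omega>' \<theta>t' assume f': "planner_feasible C B D H F d p' q' \<omega>' \<theta>t'"
      hence "P2_feasible H F d q'" and "p' = q'"
        by (auto simp: planner_feasible_def P2_feasible_def)
      hence "(\<Sum>j\<in>UNIV. J j (q $ j)) \<le> (\<Sum>j\<in>UNIV. J j (p' $ j))"
        using p2 by (simp add: P2_optimal_def)
      moreover have "0 \<le> \<omega>' \<bullet> (D *v \<omega>')" using pos_diag_nonneg[OF assms(4)] .
      ultimately show "planner_obj J D p \<omega> \<le> planner_obj J D p' \<omega>'"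
        using pq w0 by (simp add: planner_obj_def)
    qed
  qed
qed

end
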